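(* Let $\ell\geq 1$ be an integer, let $\xi\in\mathbb{R}$, $h\in\mathbb{R}\setminus\{0\}$, and let $x_i=\xi+ih$ for $i=0,1,\ldots,\ell$. Let $\mathbf{a}=(a_0,\ldots,a_\ell)\in\mathbb{R}^{\ell+1}$ and let $q_{\mathbf{a}}$ be the unique real polynomial of degree at most $\ell$ with $q_{\mathbf{a}}(x_i)=a_i$ for $i=0,\ldots,\ell$. For an integer $s\geq 0$ let $A_{s,\mathbf{a}}\in M_{\ell+1}(\mathbb{R})$ be the matrix with entries \[ (A_{s,\mathbf{a}})_{ij}=\big((i-1)(\ell+1)+j\big)^{\ell-1}\quad (1\leq i\leq \ell,\ 1\leq j\leq \ell+1),\qquad (A_{s,\mathbf{a}})_{\ell+1,j}=(j-1)^s a_{j-1}\quad (1\leq j\leq \ell+1), \] i.e. \[ A_{s,\mathbf{a}}=\begin{pmatrix} 1^{\ell-1} & 2^{\ell-1}&\cdots& (\ell+1)^{\ell-1}\\ (\ell+2)^{\ell-1} & (\ell+3)^{\ell-1}&\cdots& (2\ell+2)^{\ell-1}\\ \vdots &\vdots &&\vdots \\ (\ell^{2})^{\ell-1} & (\ell^{2}+1)^{\ell-1} &\cdots& (\ell^2+\ell)^{\ell-1}\\ 0^sa_0 &1^sa_1&\cdots &\ell^sa_\ell \end{pmatrix}. \] Then for an integer $m$ with $0\leq m\leq \ell$, the polynomial $q_{\mathbf{a}}$ has degree exactly $\ell-m$ if and only if $\det A_{s,\mathbf{a}}=0$ for $s=0,\ldots,m-1$ and $\det A_{m,\mathbf{a}}\neq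 0$.
   Context: The convention $0^0=1$ is used in the last row of $A_{s,\mathbf{a}}$. *)

theory Defs
  imports "Jordan_Normal_Form.Determinant" "HOL-Computational_Algebra.Polynomial"
begin

text \<open>The (l+1)x(l+1) matrix A_{s,a}, 0-indexed: rows 0..l-1 have entries
  ((i)(l+1)+j+1)^(l-1); the last row (index l) has entries j^s * a j (with 0^0 = 1).\<close>
definition A_mat :: "nat \<Rightarrow> nat \<Rightarrow> (nat \<Rightarrow> real) \<Rightarrow> real mat" where
  "A_mat l s a = mat (l+1) (l+1) (\<lambda>(i,j).
      if i < l then real (i*(l+1) + j + 1) ^ (l - 1)
      else real j ^ s * a j)"

end

theory Submission imports Defs begin

lemma gen_vander_nz:
  fixes x w :: "nat \<Rightarrow> real" and e :: "nat \<Rightarrow> nat"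
  assumes n: "n > 0" and inj: "inj_on x {..<n}" and einj: "inj_on e {..<n}"
    and eb: "\<And>k. k < n \<Longrightarrow> e k < n" and w: "\<And>k. k < n \<Longrightarrow> w k \<noteq> 0"
  shows "det (mat n n (\<lambda>(i,k). w k * x i ^ e k)) \<noteq> 0"
proof
  let ?V = "mat n n (\<lambda>(i,k). w k * x i ^ e k)"
  assume "det ?V = 0"
  then obtain v where v: "v \<in> carrier_vec n" "v \<noteq> 0\<^sub>v n" "?V *\<^sub>v v = 0\<^sub>v n"
    using det_0_iff_vec_prod_zero[of ?V n] by auto
  define P where "P = (\<Sum>k<n. monom (w k * v$k) (e k))"
  have roots: "poly P (x i) = poly 0 (x i)" if "i < n" for i
  proof -
    have "(?V *\<^sub>v v) $ i = 0" using v(3) that by simp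
    hence "(\<Sum>k\<in>{0..<n}. w k * x i ^ e k * v $ k) = 0"
      using that v(1) by (simp add: scalar_prod_def row_def)
    moreover have "poly P (x i) = (\<Sum>k<n. w k * v$k * x i ^ e k)"
      by (simp add: P_def poly_sum poly_monom)
    ultimately show ?thesis by (simp add: lessThan_atLeast0 mult_ac)
  qed
  have degP: "degree P < n"
    unfolding P_def by (rule degree_sum_less) (auto intro: le_less_trans[OF degree_monom_le] eb n)
  have card: "card (x ` {..<n}) = n" using inj by (simp add: card_image)
  have "P = 0"
    by (rule poly_eqI_degree[of "x ` {..<n}"]) (use roots degP card n in auto)
  have "v = 0\<^sub>v n"
  proof (rule eq_vecI)
    fix k assume k: "k < dim_vec (0\<^sub>v n :: real vec)"
    hence k: "k < n" by simp
    have "coeff P (e k) = (\<Sum>j<n. if e j = e k then w j * v$j else 0)"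
      by (simp add: P_def coeff_sum coeff_monom)
    also have "\<dots> = (\<Sum>j\<in>{k}. w j * v$j)"
      by (rule sum.mono_neutral_cong_right) (use k einj in \<open>auto simp: inj_on_def\<close>)
    finally have "w k * v$k = 0" using \<open>P = 0\<close> by simp
    thus "v $ k = 0\<^sub>v n $ k" using w[OF k] k by simp
  qed (use v in auto)
  with v(2) show False by simp
qed

definition Emat :: "nat \<Rightarrow> real poly \<Rightarrow> real mat" where
  "Emat l P = mat (l+1) (l+1) (\<lambda>(i,k). if i < l then (if k < l then real (l-1 choose k) * real (i*(l+1)+1) ^ (l-1-k) else 0) else coeff P k)"
definition E0 :: "nat \<Rightarrow> real mat" where
  "E0 l = mat l l (\<lambda>(i,k). real (l-1 choose k) * real (i*(l+1)+1) ^ (l-1-k))"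
definition Mm :: "nat \<Rightarrow> real mat" where
  "Mm l = mat (l+1) (l+1) (\<lambda>(k,j). real j ^ k)"

lemma E0_nz: assumes "l \<ge> 1" shows "det (E0 l) \<noteq> 0"
proof -
  have "det (mat l l (\<lambda>(i,k). real (l-1 choose k) * real (i*(l+1)+1) ^ (l-1-k))) \<noteq> 0"
  proof (rule gen_vander_nz)
    show "inj_on (\<lambda>i. real (i*(l+1)+1)) {..<l}"
    proof (rule inj_onI)
      fix x y assume "real (x*(l+1)+1) = real (y*(l+1)+1)"
      hence "x*(l+1)+1 = y*(l+1)+1" by (simp only: of_nat_eq_iff)
      hence "x = y \<or> l+1 = 0" by (simp only: add_right_cancel mult_cancel2)
      thus "x = y" by simp
    qed
  qed (use assms in \<open>auto simp: inj_on_def\<close>)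
  thus ?thesis by (simp add: E0_def)
qed

lemma Mm_nz: "det (Mm l) \<noteq> 0"
proof -
  have "det (mat (l+1) (l+1) (\<lambda>(i,k). (\<lambda>_. 1) k * real i ^ id k)) \<noteq> 0"
    by (rule gen_vander_nz) (auto simp: inj_on_def)
  moreover have "Mm l = transpose_mat (mat (l+1) (l+1) (\<lambda>(i,k). (\<lambda>_. 1) k * real i ^ id k))"
    by (rule eq_matI) (auto simp: Mm_def)
  ultimately show ?thesis
    by (metis det_transpose mat_carrier)
qed

lemma det_Emat: assumes "l \<ge> 1" shows "det (Emat l P) = coeff P l * det (E0 l)"
proof -
  have C: "Emat l P \<in> carrier_mat (l+1) (l+1)" by (simp add: Emat_def)
  have "det (Emat l P) = (\<Sum>i<l+1. Emat l P $$ (i,l) * cofactor (Emat l P) i l)"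
    by (rule laplace_expansion_column[OF C]) simp
  also have "\<dots> = Emat l P $$ (l,l) * cofactor (Emat l P) l l"
    by (simp add: Emat_def)
  also have "mat_delete (Emat l P) l l = E0 l"
    by (rule eq_matI) (auto simp: Emat_def E0_def mat_delete_def)
  hence "cofactor (Emat l P) l l = det (E0 l)"
    by (simp add: cofactor_def)
  finally show ?thesis by (simp add: Emat_def)
qed

lemma poly_sum_le:
  fixes P :: "real poly"
  assumes "degree P \<le> l"
  shows "poly P x = (\<Sum>k<l+1. coeff P k * x ^ k)"
proof -
  have "poly P x = poly (\<Sum>k\<le>l. monom (coeff P k) k) x"
    using poly_as_sum_of_monoms'[OF assms] by simp
  also have "\<dots> = (\<Sum>k\<le>l. coeff P k * x ^ k)" by (simp add: poly_sum poly_monom)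
  finally show ?thesis by (simp add: lessThan_Suc_atMost)
qed

lemma A_fact:
  assumes l: "l \<ge> 1" and deg: "degree P \<le> l"
    and P: "\<And>j. j \<le> l \<Longrightarrow> poly P (real j) = real j ^ s * a j"
  shows "A_mat l s a = Emat l P * Mm l"
proof (rule eq_matI)
  fix i j assume i: "i < dim_row (Emat l P * Mm l)" and j: "j < dim_col (Emat l P * Mm l)"
  hence i: "i < l+1" and j: "j < l+1" by (auto simp: Emat_def Mm_def)
  have prod: "(Emat l P * Mm l) $$ (i,j) = (\<Sum>k<l+1. Emat l P $$ (i,k) * real j ^ k)"
    using i j by (simp add: Emat_def Mm_def scalar_prod_def row_def col_def lessThan_atLeast0)
  show "A_mat l s a $$ (i, j) = (Emat l P * Mm l) $$ (i, j)"
  proof (cases "i < l")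
    case True
    let ?c = "real (i*(l+1)+1)"
    have "(\<Sum>k<l+1. Emat l P $$ (i,k) * real j ^ k) = (\<Sum>k<l. real (l-1 choose k) * ?c ^ (l-1-k) * real j ^ k)"
      using True i by (simp add: Emat_def)
    also have "\<dots> = (\<Sum>k\<le>l-1. real (l-1 choose k) * real j ^ k * ?c ^ (l-1-k))"
      using l by (intro sum.cong) (auto simp: mult_ac)
    also have "\<dots> = (real j + ?c) ^ (l-1)" by (rule binomial_ring[symmetric])
    also have "\<dots> = real (i*(l+1)+j+1) ^ (l-1)" by (simp add: algebra_simps)
    finally show ?thesis using True i j prod by (simp add: A_mat_def)
  next
    case False
    hence il: "i = l" using i by simp
    have "(\<Sum>k<l+1. Emat l P $$ (i,k) * real j ^ k) = (\<Sum>k<l+1. coeff P k * real j ^ k)"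
      using il by (simp add: Emat_def)
    also have "\<dots> = poly P (real j)" by (rule poly_sum_le[OF deg, symmetric])
    also have "\<dots> = real j ^ s * a j" using P j by simp
    finally show ?thesis using il j prod by (simp add: A_mat_def)
  qed
qed (auto simp: A_mat_def Emat_def Mm_def)

lemma det_formula:
  fixes \<xi> h :: real and a :: "nat \<Rightarrow> real" and q :: "real poly"
  assumes l: "l \<ge> 1" and sd: "s + degree q \<le> l"
    and interp: "\<And>i. i \<le> l \<Longrightarrow> poly q (\<xi> + real i * h) = a i"
  shows "det (A_mat l s a) = coeff (pcompose q [:\<xi>, h:]) (l - s) * (det (E0 l) * det (Mm l))"
proof -
  define Q where "Q = pcompose q [:\<xi>, h:]"
  define P where "P = monom 1 s * Q"
  have dQ: "degree Q \<le> degree q"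
    unfolding Q_def using degree_pcompose_le[of q "[:\<xi>, h:]"] by (simp split: if_splits)
  have dP: "degree P \<le> l"
    unfolding P_def using degree_mult_le[of "monom (1::real) s" Q] degree_monom_le[of "1::real" s] dQ sd
    by linarith
  have Pv: "poly P (real j) = real j ^ s * a j" if "j \<le> l" for j
    using interp[OF that] by (simp add: P_def Q_def poly_pcompose poly_monom mult_ac)
  have "det (A_mat l s a) = det (Emat l P * Mm l)" using A_fact[OF l dP Pv] by simp
  also have "\<dots> = det (Emat l P) * det (Mm l)"
    by (rule det_mult[of _ "l+1"]) (auto simp: Emat_def Mm_def)
  also have "\<dots> = coeff P l * (det (E0 l) * det (Mm l))" using det_Emat[OF l] by simp
  also have "coeff P l = coeff Q (l - s)" using sd by (simp add: P_def coeff_monom_mult)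
  finally show ?thesis by (simp add: Q_def)
qed

theorem theorem1:
  fixes l m :: nat and \<xi> h :: real and a :: "nat \<Rightarrow> real" and q :: "real poly"
  assumes "l \<ge> 1" and "h \<noteq> 0"
    and "degree q \<le> l"
    and "\<And>i. i \<le> l \<Longrightarrow> poly q (\<xi> + real i * h) = a i"
    and "m \<le> l"
  shows "(q \<noteq> 0 \<and> degree q = l - m) \<longleftrightarrow>
         ((\<forall>s<m. det (A_mat l s a) = 0) \<and> det (A_mat l m a) \<noteq> 0)"
proof -
  define Q where "Q = pcompose q [:\<xi>, h:]"
  define K where "K = det (E0 l) * det (Mm l)"
  have K: "K \<noteq> 0" using E0_nz[OF assms(1)] Mm_nz[of l] by (simp add: K_def)
  have dQ: "degree Q = degree q" using assms(2) by (simp add: Q_def degree_pcompose)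
  have Q0: "Q = 0 \<longleftrightarrow> q = 0" using assms(2) by (simp add: Q_def pcompose_eq_0_iff)
  have F: "det (A_mat l s a) = coeff Q (l - s) * K" if "s + degree q \<le> l" for s
    using det_formula[OF assms(1) that assms(4)] by (simp add: Q_def K_def)
  show ?thesis
  proof
    assume H: "q \<noteq> 0 \<and> degree q = l - m"
    have "det (A_mat l s a) = 0" if "s < m" for s
    proof -
      have "coeff Q (l - s) = 0" using H that assms(5) dQ by (intro coeff_eq_0) simp
      thus ?thesis using F[of s] H that assms(5) by simp
    qed
    moreover have "det (A_mat l m a) \<noteq> 0"
    proof -
      have "coeff Q (l - m) \<noteq> 0" using H dQ Q0 by (metis leading_coeff_0_iff)
      thus ?thesis using F[of m] H assms(5) K by simp
    qed
    ultimately show "(\<forall>s<m. det (A_mat l s a) = 0) \<and> det (A_mat l m a) \<noteq> 0" by blast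
  next
    assume H: "(\<forall>s<m. det (A_mat l s a) = 0) \<and> det (A_mat l m a) \<noteq> 0"
    show "q \<noteq> 0 \<and> degree q = l - m"
    proof (cases "degree q > l - m")
      case True
      hence "q \<noteq> 0" by auto
      have "l - degree q < m" using True assms(3,5) by linarith
      hence "det (A_mat l (l - degree q) a) = 0" using H by blast
      moreover have "coeff Q (l - (l - degree q)) \<noteq> 0"
        using assms(3) dQ Q0 \<open>q \<noteq> 0\<close> by (metis diff_diff_cancel leading_coeff_0_iff)
      ultimately show ?thesis using F[of "l - degree q"] assms(3) K by simp
    next
      case False
      hence "coeff Q (l - m) \<noteq> 0" using H F[of m] assms(5) by auto
      hence "Q \<noteq> 0" "l - m \<le> degree Q" using le_degree by auto
      thus ?thesis using False dQ Q0 by auto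
    qed
  qed
qed

end
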